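(* Let $t$ be a positive integer and let $M$ be a matroid with the $(t,2t)$-property. Let $C_1^*,C_2^*,\dotsc,C_{t-1}^*$ be pairwise disjoint cocircuits of $M$, and let $Y = E(M)-\bigcup_{i \in \{1,\dots,t-1\}} C_i^*$. Then for every $y \in Y$ there is a $2t$-element circuit $C_y$ of $M$ containing $y$ such that either (i) $|C_y \cap C_i^*| = 2$ for all $i \in \{1,\dots,t-1\}$, or (ii) $|C_y \cap C_j^*| = 3$ for some $j \in \{1,\dots,t-1\}$, and $|C_y \cap C_i^*| = 2$ for all $i \in \{1,\dots,t-1\}-\{j\}$. Moreover, if $C_y = S \cup \{y\}$ (with $y\notin S$) satisfies (ii), then there are at most $3t-1$ elements $w \in Y$ such that $S \cup \{w\}$ is a circuit of $M$.
   Context: A matroid $M$ has the $(t,2t)$-property if every $t$-element subset of $E(M)$ is contained in both a $2t$-element circuit and a $2t$-element cocircuit of $M$. *)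

theory Defs
  imports Main
begin

definition matroid :: "'a set \<Rightarrow> ('a set \<Rightarrow> bool) \<Rightarrow> bool" where
  "matroid E indep \<longleftrightarrow>
     finite E \<and>
     indep {} \<and>
     (\<forall>X. indep X \<longrightarrow> X \<subseteq> E) \<and>
     (\<forall>X Y. indep X \<and> Y \<subseteq> X \<longrightarrow> indep Y) \<and>
     (\<forall>X Y. indep X \<and> indep Y \<and> card X < card Y \<longrightarrow>
        (\<exists>e \<in> Y - X. indep (insert e X)))"

definition basis :: "'a set \<Rightarrow> ('a set \<Rightarrow> bool) \<Rightarrow> 'a set \<Rightarrow> bool" where
  "basis E indep B \<longleftrightarrow> indep B \<and> (\<forall>X. indep X \<and> B \<subseteq> X \<longrightarrow> X = B)"

definition circuit :: "'a set \<Rightarrow> ('a set \<Rightarrow> bool) \<Rightarrow> 'a set \<Rightarrow> bool" where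
  "circuit E indep C \<longleftrightarrow> C \<subseteq> E \<and> \<not> indep C \<and> (\<forall>D. D \<subset> C \<longrightarrow> indep D)"

definition dual_indep :: "'a set \<Rightarrow> ('a set \<Rightarrow> bool) \<Rightarrow> 'a set \<Rightarrow> bool" where
  "dual_indep E indep X \<longleftrightarrow> (\<exists>B. basis E indep B \<and> X \<subseteq> E - B)"

definition cocircuit :: "'a set \<Rightarrow> ('a set \<Rightarrow> bool) \<Rightarrow> 'a set \<Rightarrow> bool" where
  "cocircuit E indep C \<longleftrightarrow> circuit E (dual_indep E indep) C"

definition t_2t_property :: "nat \<Rightarrow> 'a set \<Rightarrow> ('a set \<Rightarrow> bool) \<Rightarrow> bool" where
  "t_2t_property t E indep \<longleftrightarrow>
     (\<forall>X. X \<subseteq> E \<and> card X = t \<longrightarrow>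
        (\<exists>C. circuit E indep C \<and> X \<subseteq> C \<and> card C = 2 * t) \<and>
        (\<exists>D. cocircuit E indep D \<and> X \<subseteq> D \<and> card D = 2 * t))"

end

theory Submission
  imports Defs
begin

lemma m_fin: "matroid E indep \<Longrightarrow> finite E" by (simp add: matroid_def)
lemma m_sub: "matroid E indep \<Longrightarrow> indep X \<Longrightarrow> X \<subseteq> E" by (simp add: matroid_def)
lemma m_her: "matroid E indep \<Longrightarrow> indep X \<Longrightarrow> Y \<subseteq> X \<Longrightarrow> indep Y"
  unfolding matroid_def by blast
lemma m_aug: "matroid E indep \<Longrightarrow> indep X \<Longrightarrow> indep Y \<Longrightarrow> card X < card Y \<Longrightarrow>
   \<exists>e \<in> Y - X. indep (insert e X)"
  unfolding matroid_def by blast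
lemma m_empty: "matroid E indep \<Longrightarrow> indep {}" by (simp add: matroid_def)

lemma circ_E: "circuit E indep C \<Longrightarrow> C \<subseteq> E" by (simp add: circuit_def)
lemma circ_dep: "circuit E indep C \<Longrightarrow> \<not> indep C" by (simp add: circuit_def)
lemma circ_min: "circuit E indep C \<Longrightarrow> D \<subset> C \<Longrightarrow> indep D" by (simp add: circuit_def)

lemma max_indep:
  assumes m: "matroid E indep" and "indep I" "I \<subseteq> A" "finite A"
  shows "\<exists>J. I \<subseteq> J \<and> J \<subseteq> A \<and> indep J \<and> (\<forall>x\<in>A - J. \<not> indep (insert x J))"
proof -
  define P where "P = {J. I \<subseteq> J \<and> J \<subseteq> A \<and> indep J}"
  have fP: "finite P" unfolding P_def using assms(4)
    by (rule finite_subset[rotated, OF finite_Pow_iff[THEN iffD2]]) auto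
  have "I \<in> P" using assms unfolding P_def by auto
  define m where "m = Max (card ` P)"
  have "m \<in> card ` P" unfolding m_def using fP \<open>I \<in> P\<close> by (intro Max_in) auto
  then obtain J where J: "J \<in> P" "card J = m" by auto
  have le: "\<And>J'. J' \<in> P \<Longrightarrow> card J' \<le> m" unfolding m_def using fP by auto
  show ?thesis
  proof (intro exI conjI ballI)
    show "I \<subseteq> J" "J \<subseteq> A" "indep J" using J unfolding P_def by auto
    fix x assume x: "x \<in> A - J"
    show "\<not> indep (insert x J)"
    proof
      assume "indep (insert x J)"
      hence "insert x J \<in> P" using J x unfolding P_def by auto
      hence "card (insert x J) \<le> m" by (rule le)
      moreover have "finite J" using \<open>J \<subseteq> A\<close> assms(4) finite_subset by blast
      ultimately show False using J x by simp
    qed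
  qed
qed

lemma indep_le_basis:
  assumes m: "matroid E indep" and B: "basis E indep B" and J: "indep J"
  shows "card J \<le> card B"
proof (rule ccontr)
  assume "\<not> ?thesis"
  hence "card B < card J" by simp
  then obtain e where e: "e \<in> J - B" "indep (insert e B)" using m_aug[OF m _ J] B
    unfolding basis_def by blast
  hence "insert e B = B" using B unfolding basis_def by blast
  thus False using e by blast
qed

lemma basis_exists:
  assumes m: "matroid E indep" shows "\<exists>B. basis E indep B"
proof -
  obtain J where J: "J \<subseteq> E" "indep J" "\<forall>x\<in>E - J. \<not> indep (insert x J)"
    using max_indep[OF m m_empty[OF m] _ m_fin[OF m]] by blast
  have "basis E indep J" unfolding basis_def
  proof (intro conjI allI impI)
    show "indep J" by fact
    fix X assume X: "indep X \<and> J \<subseteq> X"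
    show "X = J"
    proof (rule ccontr)
      assume "X \<noteq> J"
      then obtain x where "x \<in> X" "x \<notin> J" using X by blast
      moreover have "X \<subseteq> E" using m_sub[OF m] X by blast
      ultimately show False using J(3) m_her[OF m, of X "insert x J"] X by blast
    qed
  qed
  thus ?thesis by blast
qed

lemma big_basis:
  assumes m: "matroid E indep" and B: "basis E indep B" and J: "indep J" and c: "card B \<le> card J"
  shows "basis E indep J"
  unfolding basis_def
proof (intro conjI allI impI)
  show "indep J" by fact
  fix X assume X: "indep X \<and> J \<subseteq> X"
  have "card X \<le> card B" using indep_le_basis[OF m B] X by blast
  moreover have "finite X" using m_sub[OF m] X m_fin[OF m] finite_subset by blast
  moreover have "card J \<le> card X" using X \<open>finite X\<close> card_mono by blast
  ultimately have "card J = card X" using c by linarith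
  thus "X = J" using card_subset_eq[OF \<open>finite X\<close>] X by blast
qed

lemma orth:
  assumes m: "matroid E indep" and C: "circuit E indep C" and D: "cocircuit E indep D"
  shows "card (C \<inter> D) \<noteq> 1"
proof
  assume "card (C \<inter> D) = 1"
  then obtain e where e: "C \<inter> D = {e}" by (auto simp: card_Suc_eq)
  have Dc: "D \<subseteq> E" "\<not> dual_indep E indep D" "\<And>D'. D' \<subset> D \<Longrightarrow> dual_indep E indep D'"
    using D unfolding cocircuit_def circuit_def by auto
  have "dual_indep E indep (D - {e})" using Dc(3) e by blast
  then obtain B where B: "basis E indep B" "D - {e} \<subseteq> E - B" unfolding dual_indep_def by blast
  have eB: "e \<in> B"
  proof (rule ccontr)
    assume "e \<notin> B"
    hence "D \<subseteq> E - B" using B Dc(1) by blast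
    thus False using Dc(2) B unfolding dual_indep_def by blast
  qed
  have "C - {e} \<subset> C" using e by blast
  hence Cc: "C \<subseteq> E" "\<not> indep C" "indep (C - {e})" using circ_E[OF C] circ_dep[OF C] circ_min[OF C] by auto
  have fA: "finite ((C - {e}) \<union> B)"
    using m_fin[OF m] Cc(1) m_sub[OF m] B(1) unfolding basis_def by (meson finite_Un finite_subset Diff_subset subset_trans)
  obtain J where J: "C - {e} \<subseteq> J" "J \<subseteq> (C - {e}) \<union> B" "indep J"
      "\<forall>x\<in>((C - {e}) \<union> B) - J. \<not> indep (insert x J)"
    using max_indep[OF m Cc(3) _ fA] by blast
  have "card B \<le> card J"
  proof (rule ccontr)
    assume "\<not> ?thesis"
    then obtain b where "b \<in> B - J" "indep (insert b J)"
      using m_aug[OF m J(3)] B(1) unfolding basis_def by (meson not_le)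
    thus False using J(4) by blast
  qed
  hence JB: "basis E indep J" using big_basis[OF m B(1) J(3)] by blast
  show False
  proof (cases "e \<in> J")
    case True
    hence "C \<subseteq> J" using J(1) by blast
    thus False using m_her[OF m J(3)] Cc(2) by blast
  next
    case False
    have "D \<subseteq> E - J" using J(2) False e B(2) Dc(1) by blast
    thus False using Dc(2) JB unfolding dual_indep_def by blast
  qed
qed

lemma dep_circuit:
  assumes m: "matroid E indep" and "X \<subseteq> E" "\<not> indep X"
  shows "\<exists>C\<subseteq>X. circuit E indep C"
proof -
  have "finite X" using assms m_fin finite_subset by blast
  thus ?thesis using assms(2,3)
  proof (induction X rule: finite_psubset_induct)
    case (psubset X)
    show ?case
    proof (cases "\<forall>D. D \<subset> X \<longrightarrow> indep D")
      case True
      thus ?thesis using psubset unfolding circuit_def by blast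
    next
      case False
      then obtain D where "D \<subset> X" "\<not> indep D" by blast
      thus ?thesis using psubset.IH[of D] psubset.prems by blast
    qed
  qed
qed

lemma circuit_through:
  assumes m: "matroid E indep" and "indep J" "insert s J \<subseteq> E" "\<not> indep (insert s J)"
  shows "\<exists>C \<subseteq> insert s J. circuit E indep C \<and> s \<in> C"
proof -
  obtain C where C: "C \<subseteq> insert s J" "circuit E indep C" using dep_circuit[OF m assms(3,4)] by blast
  have "s \<in> C"
  proof (rule ccontr)
    assume "s \<notin> C"
    hence "C \<subseteq> J" using C by blast
    thus False using m_her[OF m assms(2)] C(2) unfolding circuit_def by blast
  qed
  thus ?thesis using C by blast
qed

lemma circuit_big:
  assumes m: "matroid E indep" and p: "t_2t_property t E indep" and t: "t \<ge> 1"
    and C: "circuit E indep C" and tE: "t \<le> card E"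
  shows "t < card C"
proof (rule ccontr)
  assume "\<not> ?thesis"
  hence cC: "card C \<le> t" by simp
  have CE: "C \<subseteq> E" using C unfolding circuit_def by auto
  have fE: "finite E" using m_fin[OF m] .
  have fC: "finite C" using CE fE finite_subset by blast
  have "t - card C \<le> card (E - C)" using tE cC card_Diff_subset[OF fC CE] by simp
  then obtain R where R: "R \<subseteq> E - C" "card R = t - card C" "finite R"
    by (rule obtain_subset_with_card_n)
  have "C \<inter> R = {}" using R by blast
  hence X: "card (C \<union> R) = t" using R cC fC card_Un_disjoint[OF fC R(3)] by simp
  have XE: "C \<union> R \<subseteq> E" using R CE by blast
  obtain C' where C': "circuit E indep C'" "C \<union> R \<subseteq> C'" "card C' = 2 * t"
    using p XE X unfolding t_2t_property_def by blast
  have "C \<noteq> C'" using C' cC t by auto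
  hence "C \<subset> C'" using C' by blast
  hence "indep C" using C'(1) unfolding circuit_def by blast
  thus False using C unfolding circuit_def by blast
qed

lemma coc_ne:
  assumes m: "matroid E indep" and D: "cocircuit E indep D" shows "D \<noteq> {}"
proof
  assume "D = {}"
  obtain B where "basis E indep B" using basis_exists[OF m] by blast
  hence "dual_indep E indep {}" unfolding dual_indep_def by blast
  moreover have "\<not> dual_indep E indep D" using D unfolding cocircuit_def by (rule circ_dep)
  ultimately show False using \<open>D = {}\<close> by simp
qed

lemma coc_E: "cocircuit E indep D \<Longrightarrow> D \<subseteq> E"
  unfolding cocircuit_def by (rule circ_E)

lemma sum_ge2:
  fixes g :: "nat \<Rightarrow> nat"
  assumes "finite A" "\<forall>i\<in>A. 2 \<le> g i" shows "2 * card A \<le> sum g A"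
proof -
  have "sum (\<lambda>_. 2) A \<le> sum g A" using assms(2) by (intro sum_mono) auto
  thus ?thesis by simp
qed

theorem lemma5p3:
  fixes t :: nat and E :: "'a set" and indep :: "'a set \<Rightarrow> bool"
    and Cs :: "nat \<Rightarrow> 'a set" and Y :: "'a set"
  assumes "t \<ge> 1"
    and "matroid E indep"
    and "t_2t_property t E indep"
    and "\<forall>i \<in> {1..t-1}. cocircuit E indep (Cs i)"
    and "\<forall>i \<in> {1..t-1}. \<forall>j \<in> {1..t-1}. i \<noteq> j \<longrightarrow> Cs i \<inter> Cs j = {}"
    and "Y = E - (\<Union>i \<in> {1..t-1}. Cs i)"
  shows "(\<forall>y \<in> Y. \<exists>C. circuit E indep C \<and> card C = 2 * t \<and> y \<in> C \<and>
            ((\<forall>i \<in> {1..t-1}. card (C \<inter> Cs i) = 2) \<or>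
             (\<exists>j \<in> {1..t-1}. card (C \<inter> Cs j) = 3 \<and>
                (\<forall>i \<in> {1..t-1} - {j}. card (C \<inter> Cs i) = 2))))
    \<and> (\<forall>y \<in> Y. \<forall>S. y \<notin> S \<longrightarrow> circuit E indep (S \<union> {y}) \<longrightarrow> card (S \<union> {y}) = 2 * t \<longrightarrow>
          (\<exists>j \<in> {1..t-1}. card ((S \<union> {y}) \<inter> Cs j) = 3 \<and>
             (\<forall>i \<in> {1..t-1} - {j}. card ((S \<union> {y}) \<inter> Cs i) = 2)) \<longrightarrow>
          card {w \<in> Y. circuit E indep (S \<union> {w})} \<le> 3 * t - 1)"
proof -
  define I where "I = {1..t-1}"
  note m = assms(2) and p = assms(3)
  have coc: "\<And>i. i \<in> I \<Longrightarrow> cocircuit E indep (Cs i)" using assms(4) I_def by blast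
  have dis: "\<And>i k. i \<in> I \<Longrightarrow> k \<in> I \<Longrightarrow> i \<noteq> k \<Longrightarrow> Cs i \<inter> Cs k = {}" using assms(5) I_def by blast
  have CsE: "\<And>i. i \<in> I \<Longrightarrow> Cs i \<subseteq> E" using coc coc_E by blast
  have YE: "Y \<subseteq> E" using assms(6) by blast
  have Yd: "\<And>i x. i \<in> I \<Longrightarrow> x \<in> Y \<Longrightarrow> x \<notin> Cs i" using assms(6) I_def by blast
  have fE: "finite E" using m_fin[OF m] .
  have fI: "finite I" and cI: "card I = t - 1" unfolding I_def by auto
  have P1: "\<forall>y \<in> Y. \<exists>C. circuit E indep C \<and> card C = 2 * t \<and> y \<in> C \<and>
            ((\<forall>i \<in> I. card (C \<inter> Cs i) = 2) \<or>
             (\<exists>j \<in> I. card (C \<inter> Cs j) = 3 \<and>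
                (\<forall>i \<in> I - {j}. card (C \<inter> Cs i) = 2)))"
  proof
    fix y assume y: "y \<in> Y"
    define f where "f i = (SOME x. x \<in> Cs i)" for i
    have fi: "f i \<in> Cs i" if i: "i \<in> I" for i
    proof -
      have "Cs i \<noteq> {}" using coc_ne[OF m coc[OF i]] .
      thus ?thesis unfolding f_def by (simp add: some_in_eq)
    qed
    have inj: "inj_on f I"
    proof (rule inj_onI)
      fix i k assume "i \<in> I" "k \<in> I" "f i = f k"
      show "i = k"
      proof (rule ccontr)
        assume "i \<noteq> k"
        hence "Cs i \<inter> Cs k = {}" using dis \<open>i \<in> I\<close> \<open>k \<in> I\<close> by blast
        moreover have "f i \<in> Cs i" "f k \<in> Cs k" using fi \<open>i \<in> I\<close> \<open>k \<in> I\<close> by auto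
        ultimately show False using \<open>f i = f k\<close> by auto
      qed
    qed
    have yn: "y \<notin> f ` I" using fi Yd y by blast
    define X where "X = insert y (f ` I)"
    have cX: "card X = t" unfolding X_def using yn inj fI cI assms(1) by (simp add: card_image)
    have XE: "X \<subseteq> E" unfolding X_def using y YE fi CsE by blast
    obtain C where C: "circuit E indep C" "X \<subseteq> C" "card C = 2 * t"
      using p XE cX unfolding t_2t_property_def by blast
    have fC: "finite C" using circ_E[OF C(1)] fE finite_subset by blast
    define g where "g i = card (C \<inter> Cs i)" for i
    have g2: "\<forall>i\<in>I. 2 \<le> g i"
    proof
      fix i assume i: "i \<in> I"
      have "g i \<noteq> 1" unfolding g_def using orth[OF m C(1) coc[OF i]] .
      moreover have "f i \<in> C \<inter> Cs i" using fi[OF i] C(2) i unfolding X_def by blast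
      hence "g i \<noteq> 0" unfolding g_def using fC by auto
      ultimately show "2 \<le> g i" by linarith
    qed
    have "sum g I = card (\<Union>i\<in>I. C \<inter> Cs i)" unfolding g_def
      using fC dis by (intro card_UN_disjoint[symmetric] fI) auto
    also have "\<dots> \<le> card (C - {y})"
      using fC Yd y by (intro card_mono) auto
    also have "\<dots> = 2 * t - 1" using C y unfolding X_def by simp
    finally have sle: "sum g I \<le> 2 * t - 1" .
    show "\<exists>C. circuit E indep C \<and> card C = 2 * t \<and> y \<in> C \<and>
            ((\<forall>i \<in> I. card (C \<inter> Cs i) = 2) \<or>
             (\<exists>j \<in> I. card (C \<inter> Cs j) = 3 \<and>
                (\<forall>i \<in> I - {j}. card (C \<inter> Cs i) = 2)))"
    proof (intro exI conjI)
      show "circuit E indep C" "card C = 2 * t" "y \<in> C" using C unfolding X_def by auto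
      show "(\<forall>i \<in> I. card (C \<inter> Cs i) = 2) \<or>
             (\<exists>j \<in> I. card (C \<inter> Cs j) = 3 \<and> (\<forall>i \<in> I - {j}. card (C \<inter> Cs i) = 2))"
      proof (cases "\<forall>i \<in> I. g i = 2")
        case True thus ?thesis unfolding g_def by blast
      next
        case False
        then obtain j where j: "j \<in> I" "g j \<noteq> 2" by blast
        have s1: "sum g I = g j + sum g (I - {j})" using sum.remove[OF fI j(1)] .
        have cIj: "card (I - {j}) = t - 2" using cI j fI by simp
        have s2: "2 * card (I - {j}) \<le> sum g (I - {j})" using g2 fI by (intro sum_ge2) auto
        have t2: "t \<ge> 2" using j(1) unfolding I_def by auto
        have gj: "g j = 3" using s1 s2 cIj sle g2 j t2 by fastforce
        have "\<forall>i \<in> I - {j}. g i = 2"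
        proof
          fix i assume i: "i \<in> I - {j}"
          show "g i = 2"
          proof (rule ccontr)
            assume "g i \<noteq> 2"
            hence gi: "g i \<ge> 3" using g2 i by fastforce
            have s3: "sum g (I - {j}) = g i + sum g (I - {j} - {i})"
              using sum.remove[of "I - {j}" i g] fI i by simp
            have cIji: "card (I - {j} - {i}) = t - 3" using cIj i fI by simp
            have s4: "2 * card (I - {j} - {i}) \<le> sum g (I - {j} - {i})" using g2 fI by (intro sum_ge2) auto
            have "card I \<ge> 2"
            proof -
              have "{i, j} \<subseteq> I" using i j by blast
              hence "card {i,j} \<le> card I" using fI card_mono by blast
              thus ?thesis using i by simp
            qed
            hence "t \<ge> 3" using cI by simp
            thus False using s1 s3 s4 cIji sle gi gj by linarith
          qed
        qed
        thus ?thesis using gj j unfolding g_def by blast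
      qed
    qed
  qed
  have P2: "\<forall>y \<in> Y. \<forall>S. y \<notin> S \<longrightarrow> circuit E indep (S \<union> {y}) \<longrightarrow> card (S \<union> {y}) = 2 * t \<longrightarrow>
          (\<exists>j \<in> I. card ((S \<union> {y}) \<inter> Cs j) = 3 \<and>
             (\<forall>i \<in> I - {j}. card ((S \<union> {y}) \<inter> Cs i) = 2)) \<longrightarrow>
          card {w \<in> Y. circuit E indep (S \<union> {w})} \<le> 3 * t - 1"
  proof (intro ballI allI impI)
    fix y S assume y: "y \<in> Y" and yS: "y \<notin> S" and Cy: "circuit E indep (S \<union> {y})"
      and cCy: "card (S \<union> {y}) = 2 * t"
      and ex: "\<exists>j \<in> I. card ((S \<union> {y}) \<inter> Cs j) = 3 \<and>
             (\<forall>i \<in> I - {j}. card ((S \<union> {y}) \<inter> Cs i) = 2)"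
    define W where "W = {w \<in> Y. circuit E indep (S \<union> {w})}"
    obtain j where j: "j \<in> I" "card ((S \<union> {y}) \<inter> Cs j) = 3"
       "\<forall>i \<in> I - {j}. card ((S \<union> {y}) \<inter> Cs i) = 2" using ex by blast
    have t2: "t \<ge> 2" using j(1) unfolding I_def by auto
    have SE: "S \<subseteq> E" using circ_E[OF Cy] by blast
    have fS: "finite S" using SE fE finite_subset by blast
    have Si: "indep S" using circ_min[OF Cy, of S] yS by blast
    have cS: "card S = 2 * t - 1" using cCy yS fS by simp
    have Sne: "\<And>i. i \<in> I \<Longrightarrow> S \<inter> Cs i \<noteq> {}"
    proof -
      fix i assume i: "i \<in> I"
      have "card ((S \<union> {y}) \<inter> Cs i) \<ge> 2" using j i by (cases "i = j") auto
      moreover have "(S \<union> {y}) \<inter> Cs i = S \<inter> Cs i" using Yd[OF i y] by blast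
      ultimately show "S \<inter> Cs i \<noteq> {}" by (metis card.empty not_numeral_le_zero)
    qed
    have WY: "W \<subseteq> Y" unfolding W_def by blast
    have WE: "W \<subseteq> E" using WY YE by blast
    have fW: "finite W" using WE fE finite_subset by blast
    have Wdep: "\<And>w. w \<in> W \<Longrightarrow> \<not> indep (insert w S)"
      unfolding W_def using circ_dep by fastforce
    have cA: "\<And>J. indep J \<Longrightarrow> J \<subseteq> S \<union> W \<Longrightarrow> card J \<le> 2 * t - 1"
    proof (rule ccontr)
      fix J assume J: "indep J" "J \<subseteq> S \<union> W" "\<not> card J \<le> 2 * t - 1"
      then obtain e where "e \<in> J - S" "indep (insert e S)" using m_aug[OF m Si J(1)] cS by auto
      thus False using Wdep J(2) by blast
    qed
    have cB: "\<And>Z. Z \<subseteq> W \<Longrightarrow> card Z = t + 1 \<Longrightarrow> \<not> indep Z"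
    proof
      fix Z assume Z: "Z \<subseteq> W" "card Z = t + 1" "indep Z"
      have fZS: "finite (Z \<union> S)" using Z(1) fW fS finite_subset by blast
      obtain J where J: "Z \<subseteq> J" "J \<subseteq> Z \<union> S" "indep J" "\<forall>x\<in>(Z \<union> S) - J. \<not> indep (insert x J)"
        using max_indep[OF m Z(3) _ fZS] by blast
      have cJ: "card J \<le> 2 * t - 1" using cA[OF J(3)] J(2) Z(1) by blast
      have fJ: "finite J" using J(2) fZS finite_subset by blast
      have fZ: "finite Z" using J(1) fJ finite_subset by blast
      have "card (J - Z) = card J - card Z" using card_Diff_subset[OF fZ J(1)] .
      hence cJZ: "card (J - Z) \<le> t - 2" using Z(2) cJ by arith
      obtain i where i: "i \<in> I" "(J - Z) \<inter> Cs i = {}"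
      proof (rule ccontr)
        assume "\<not> thesis"
        hence ne: "\<forall>i\<in>I. (J - Z) \<inter> Cs i \<noteq> {}" using that by blast
        define h where "h i = (SOME x. x \<in> (J - Z) \<inter> Cs i)" for i
        have hi: "h i \<in> (J - Z) \<inter> Cs i" if i: "i \<in> I" for i
        proof -
          have "\<exists>x. x \<in> (J - Z) \<inter> Cs i" using ne i by blast
          thus ?thesis unfolding h_def by (rule someI_ex)
        qed
        have "inj_on h I"
        proof (rule inj_onI)
          fix i k assume "i \<in> I" "k \<in> I" "h i = h k"
          show "i = k"
          proof (rule ccontr)
            assume "i \<noteq> k"
            hence "Cs i \<inter> Cs k = {}" using dis \<open>i \<in> I\<close> \<open>k \<in> I\<close> by blast
            moreover have "h i \<in> Cs i" "h k \<in> Cs k" using hi \<open>i \<in> I\<close> \<open>k \<in> I\<close> by auto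
            ultimately show False using \<open>h i = h k\<close> by auto
          qed
        qed
        hence "card (h ` I) = t - 1" using cI by (simp add: card_image)
        moreover have "card (h ` I) \<le> card (J - Z)" using hi fJ by (intro card_mono) auto
        ultimately show False using cJZ t2 by linarith
      qed
      obtain s where s: "s \<in> S" "s \<in> Cs i" using Sne[OF i(1)] by blast
      have sJ: "s \<notin> J"
      proof
        assume "s \<in> J"
        hence "s \<in> Z" using i s by blast
        thus False using Z(1) WY Yd[OF i(1)] s by blast
      qed
      hence dep: "\<not> indep (insert s J)" using J(4) s by blast
      have "insert s J \<subseteq> E" using J(2) Z(1) WE SE s by blast
      then obtain C where C: "C \<subseteq> insert s J" "circuit E indep C" "s \<in> C"
        using circuit_through[OF m J(3) _ dep] by blast
      have "C \<inter> Cs i \<subseteq> {s}"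
      proof
        fix c assume c: "c \<in> C \<inter> Cs i"
        show "c \<in> {s}"
        proof (rule ccontr)
          assume cs: "c \<notin> {s}"
          have "c \<in> J" using c C(1) cs by blast
          moreover have "c \<notin> J - Z" using c i(2) by blast
          ultimately have "c \<in> Z" by blast
          hence "c \<in> Y" using Z(1) WY by blast
          thus False using Yd[OF i(1)] c by blast
        qed
      qed
      moreover have "s \<in> C \<inter> Cs i" using C(3) s(2) by blast
      ultimately have "C \<inter> Cs i = {s}" by blast
      thus False using orth[OF m C(2) coc[OF i(1)]] by simp
    qed
    show "card {w \<in> Y. circuit E indep (S \<union> {w})} \<le> 3 * t - 1"
      unfolding W_def[symmetric]
    proof (rule ccontr)
      assume "\<not> card W \<le> 3 * t - 1"
      hence cW: "card W \<ge> 3 * t" by simp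
      have "t \<le> card W" using cW by linarith
      then obtain X where X: "X \<subseteq> W" "card X = t" "finite X"
        by (rule obtain_subset_with_card_n)
      have XE: "X \<subseteq> E" using X(1) WE by blast
      obtain D where D: "cocircuit E indep D" "X \<subseteq> D" "card D = 2 * t"
        using p XE X(2) unfolding t_2t_property_def by blast
      have fD: "finite D" using coc_E[OF D(1)] fE finite_subset by blast
      have "W \<subseteq> (W - D) \<union> D" by blast
      hence "card W \<le> card ((W - D) \<union> D)" using fD fW by (intro card_mono) auto
      also have "\<dots> \<le> card (W - D) + card D" by (rule card_Un_le)
      finally have "card W \<le> card (W - D) + card D" .
      hence "t \<le> card (W - D)" using cW D(3) by linarith
      then obtain Z where Z: "Z \<subseteq> W - D" "card Z = t" "finite Z"
        by (rule obtain_subset_with_card_n)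
      have "X \<noteq> {}" using X assms(1) by auto
      then obtain x where x: "x \<in> X" by blast
      have xZ: "x \<notin> Z" using x D(2) Z(1) by blast
      have "card (insert x Z) = t + 1" using xZ Z by simp
      moreover have "insert x Z \<subseteq> W" using x X Z by blast
      ultimately have dep: "\<not> indep (insert x Z)" using cB by blast
      have "insert x Z \<subseteq> E" using \<open>insert x Z \<subseteq> W\<close> WE by blast
      then obtain C where C: "C \<subseteq> insert x Z" "circuit E indep C"
        using dep_circuit[OF m _ dep] by blast
      have tE: "t \<le> card E" using cW card_mono[OF fE WE] by linarith
      have big: "t < card C" using circuit_big[OF m p assms(1) C(2) tE] .
      have xC: "x \<in> C"
      proof (rule ccontr)
        assume "x \<notin> C"
        hence "C \<subseteq> Z" using C by blast
        hence "card C \<le> card Z" using card_mono[OF Z(3)] by blast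
        hence "card C \<le> t" using Z(2) by simp
        thus False using big by simp
      qed
      have "C \<inter> D = {x}" using C(1) xC x D(2) Z(1) by blast
      thus False using orth[OF m C(2) D(1)] by simp
    qed
  qed
  show ?thesis using P1 P2 unfolding I_def by blast
qed

end
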